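(* Let $H$ be a digraph and let $\widehat{H}\supseteq H$ be a strongly connected digraph. Then there exists $H^*\in GPC(H)$ such that $H^*\subseteq\widehat{H}$.
   Context: $D_1\cup D_2$ denotes the digraph with vertex set $V(D_1)\cup V(D_2)$ and arc set $A(D_1)\cup A(D_2)$. The path completions $PC(H)$ of $H$ are the strongly connected digraphs of the form $H^*=H\cup P_1\cup\dots\cup P_\ell$ where each $P_i$ is a directed path whose two end-points lie in $V(H)$ (the paths need not be vertex-disjoint from each other or from $H$); $\{P_1,\dots,P_\ell\}$ is a witnessing collection of paths. The good path completions $GPC(H)\subseteq PC(H)$ are those $H^*\in PC(H)$ admitting such a representation in which the ordered pairs of end-points of the paths $P_i$ are pairwise distinct (so $\ell\le|V(H)|^2$). *)

theory Defs
  imports Main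
begin

type_synonym 'a digraph = "'a set \<times> ('a \<times> 'a) set"

definition verts :: "'a digraph \<Rightarrow> 'a set" where "verts D = fst D"
definition arcs :: "'a digraph \<Rightarrow> ('a \<times> 'a) set" where "arcs D = snd D"

definition is_digraph :: "'a digraph \<Rightarrow> bool" where
  "is_digraph D \<longleftrightarrow> finite (verts D) \<and> arcs D \<subseteq> verts D \<times> verts D"

definition subdigraph :: "'a digraph \<Rightarrow> 'a digraph \<Rightarrow> bool" where
  "subdigraph D1 D2 \<longleftrightarrow> verts D1 \<subseteq> verts D2 \<and> arcs D1 \<subseteq> arcs D2"

definition dunion :: "'a digraph \<Rightarrow> 'a digraph \<Rightarrow> 'a digraph" where
  "dunion D1 D2 = (verts D1 \<union> verts D2, arcs D1 \<union> arcs D2)"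

definition strongly_connected :: "'a digraph \<Rightarrow> bool" where
  "strongly_connected D \<longleftrightarrow> (\<forall>u\<in>verts D. \<forall>v\<in>verts D. (u, v) \<in> (arcs D)\<^sup>*)"

definition is_dipath :: "'a list \<Rightarrow> bool" where
  "is_dipath p \<longleftrightarrow> p \<noteq> [] \<and> distinct p"

definition path_digraph :: "'a list \<Rightarrow> 'a digraph" where
  "path_digraph p = (set p, set (zip p (tl p)))"

definition with_paths :: "'a digraph \<Rightarrow> 'a list list \<Rightarrow> 'a digraph" where
  "with_paths H ps = (verts H \<union> (\<Union>p\<in>set ps. set p),
                      arcs H \<union> (\<Union>p\<in>set ps. set (zip p (tl p))))"

definition PC :: "'a digraph \<Rightarrow> 'a digraph set" where
  "PC H = {Hs. strongly_connected Hs \<and>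
     (\<exists>ps. (\<forall>p\<in>set ps. is_dipath p \<and> hd p \<in> verts H \<and> last p \<in> verts H)
           \<and> Hs = with_paths H ps)}"

definition GPC :: "'a digraph \<Rightarrow> 'a digraph set" where
  "GPC H = {Hs. strongly_connected Hs \<and>
     (\<exists>ps. (\<forall>p\<in>set ps. is_dipath p \<and> hd p \<in> verts H \<and> last p \<in> verts H)
           \<and> distinct (map (\<lambda>p. (hd p, last p)) ps)
           \<and> Hs = with_paths H ps)}"

end

theory Submission
  imports Defs "HOL-Library.Transitive_Closure_Table"
begin

lemma rpath_zip:
  "rtrancl_path r x xs y \<Longrightarrow> set (zip (x#xs) xs) \<subseteq> {(a,b). r a b} \<and> last (x#xs) = y"
  by (induction rule: rtrancl_path.induct) auto

lemma exists_dipath: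
  assumes "(u, v) \<in> R\<^sup>*"
  shows "\<exists>p. is_dipath p \<and> hd p = u \<and> last p = v \<and> set (zip p (tl p)) \<subseteq> R"
proof -
  have "(\<lambda>a b. (a,b) \<in> R)\<^sup>*\<^sup>* u v" using assms by (simp add: rtrancl_def)
  then obtain xs where "rtrancl_path (\<lambda>a b. (a,b) \<in> R) u xs v"
    by (auto simp: rtranclp_eq_rtrancl_path)
  then obtain xs' where p: "rtrancl_path (\<lambda>a b. (a,b) \<in> R) u xs' v" "distinct (u # xs')"
    by (rule rtrancl_path_distinct)
  from rpath_zip[OF p(1)] p(2) show ?thesis
    by (intro exI[of _ "u#xs'"]) (auto simp: is_dipath_def)
qed

lemma path_reach:
  "x \<in> set p \<Longrightarrow> (hd p, x) \<in> (set (zip p (tl p)))\<^sup>* \<and> (x, last p) \<in> (set (zip p (tl p)))\<^sup>*"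
proof (induction p arbitrary: x)
  case Nil then show ?case by simp
next
  case (Cons a p)
  show ?case
  proof (cases p)
    case Nil with Cons show ?thesis by simp
  next
    case (Cons b q)
    have sub: "set (zip p (tl p)) \<subseteq> set (zip (a#p) (tl (a#p)))" using Cons by auto
    have ab: "(a, hd p) \<in> set (zip (a#p) (tl (a#p)))" using Cons by simp
    have lp: "last (a#p) = last p" using Cons by simp
    show ?thesis
    proof (cases "x = a")
      case True
      have "(hd p, last p) \<in> (set (zip p (tl p)))\<^sup>*"
        using \<open>p = b#q\<close> Cons.IH[of "last p"] by simp
      then have "(hd p, last p) \<in> (set (zip (a#p) (tl (a#p))))\<^sup>*"
        using rtrancl_mono[OF sub] by blast
      with ab True lp show ?thesis by (auto intro: converse_rtrancl_into_rtrancl)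
    next
      case False
      with Cons.prems have "x \<in> set p" by simp
      from Cons.IH[OF this] rtrancl_mono[OF sub]
      have "(hd p, x) \<in> (set (zip (a#p) (tl (a#p))))\<^sup>*"
        "(x, last p) \<in> (set (zip (a#p) (tl (a#p))))\<^sup>*" by blast+
      with ab lp show ?thesis by (auto intro: converse_rtrancl_into_rtrancl)
    qed
  qed
qed

theorem lemma19:
  fixes H Hhat :: "'a digraph"
  assumes "is_digraph H" and "is_digraph Hhat"
    and "subdigraph H Hhat"
    and "strongly_connected Hhat"
  shows "\<exists>Hs\<in>GPC H. subdigraph Hs Hhat"
proof -
  obtain xs where xs: "set xs = verts H" "distinct xs"
    using assms(1) finite_distinct_list unfolding is_digraph_def by blast
  define P where "P u v = (SOME p. is_dipath p \<and> hd p = u \<and> last p = v \<and> set (zip p (tl p)) \<subseteq> arcs Hhat)" for u v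
  have P: "is_dipath (P u v) \<and> hd (P u v) = u \<and> last (P u v) = v \<and> set (zip (P u v) (tl (P u v))) \<subseteq> arcs Hhat"
    if "u \<in> verts H" "v \<in> verts H" for u v
  proof -
    have "u \<in> verts Hhat" "v \<in> verts Hhat" using that assms(3) by (auto simp: subdigraph_def)
    then have "(u,v) \<in> (arcs Hhat)\<^sup>*" using assms(4) by (auto simp: strongly_connected_def)
    from exists_dipath[OF this] show ?thesis unfolding P_def by (rule someI_ex)
  qed
  define ps where "ps = map (\<lambda>(u,v). P u v) (List.product xs xs)"
  define Hs where "Hs = with_paths H ps"
  have psP: "p \<in> set ps \<longleftrightarrow> (\<exists>u\<in>verts H. \<exists>v\<in>verts H. p = P u v)" for p
    using xs by (auto simp: ps_def)
  have ok: "\<forall>p\<in>set ps. is_dipath p \<and> hd p \<in> verts H \<and> last p \<in> verts H"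
    using psP P by fastforce
  have mp: "map (\<lambda>p. (hd p, last p)) ps = List.product xs xs"
  proof -
    have "map (\<lambda>p. (hd p, last p)) ps = map (\<lambda>(u,v). (hd (P u v), last (P u v))) (List.product xs xs)"
      by (simp add: ps_def case_prod_beta)
    also have "\<dots> = map (\<lambda>x. x) (List.product xs xs)"
      by (rule map_cong) (use P xs in auto)
    finally show ?thesis by simp
  qed
  have dist: "distinct (map (\<lambda>p. (hd p, last p)) ps)"
    unfolding mp using xs by (simp add: distinct_product)
  let ?A = "arcs Hs"
  have arcsHs: "arcs Hs = arcs H \<union> (\<Union>p\<in>set ps. set (zip p (tl p)))"
    by (simp add: Hs_def with_paths_def arcs_def)
  have vertsHs: "verts Hs = verts H \<union> (\<Union>p\<in>set ps. set p)"
    by (simp add: Hs_def with_paths_def verts_def)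
  have pathA: "p \<in> set ps \<Longrightarrow> set (zip p (tl p)) \<subseteq> ?A" for p
    using arcsHs by auto
  have HH: "(u,v) \<in> ?A\<^sup>*" if "u \<in> verts H" "v \<in> verts H" for u v
  proof -
    have "P u v \<in> set ps" using psP that by blast
    moreover have "last (P u v) \<in> set (P u v)" using P[OF that] by (metis is_dipath_def last_in_set)
    ultimately have "(hd (P u v), last (P u v)) \<in> ?A\<^sup>*"
      using path_reach[of "last (P u v)" "P u v"] rtrancl_mono[OF pathA] by blast
    then show ?thesis using P[OF that] by simp
  qed
  have toH: "\<exists>u\<in>verts H. (x,u) \<in> ?A\<^sup>* \<and> (u,x) \<in> ?A\<^sup>*" if xin: "x \<in> verts Hs" for x
  proof (cases "x \<in> verts H")
    case True then show ?thesis by blast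
  next
    case False
    then obtain p where p: "p \<in> set ps" "x \<in> set p" using xin vertsHs by blast
    have r: "(hd p, x) \<in> (set (zip p (tl p)))\<^sup>*" "(x, last p) \<in> (set (zip p (tl p)))\<^sup>*"
      using path_reach[OF p(2)] by auto
    have m: "(set (zip p (tl p)))\<^sup>* \<subseteq> ?A\<^sup>*" using rtrancl_mono[OF pathA[OF p(1)]] .
    have r1: "(hd p, x) \<in> ?A\<^sup>*" using r(1) m by (rule subsetD[rotated])
    have r2: "(x, last p) \<in> ?A\<^sup>*" using r(2) m by (rule subsetD[rotated])
    have hl: "hd p \<in> verts H" "last p \<in> verts H" using ok p(1) by auto
    have r3: "(last p, hd p) \<in> ?A\<^sup>*" using HH[OF hl(2) hl(1)] .
    have "(x, hd p) \<in> ?A\<^sup>*" using rtrancl_trans[OF r2 r3] .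
    then show ?thesis using hl(1) r1 by blast
  qed
  have sc: "strongly_connected Hs"
    unfolding strongly_connected_def
  proof (intro ballI)
    fix x y assume "x \<in> verts Hs" "y \<in> verts Hs"
    obtain u where u: "u \<in> verts H" "(x,u) \<in> ?A\<^sup>*" using toH[OF \<open>x \<in> verts Hs\<close>] by blast
    obtain w where w: "w \<in> verts H" "(w,y) \<in> ?A\<^sup>*" using toH[OF \<open>y \<in> verts Hs\<close>] by blast
    have "(u,w) \<in> ?A\<^sup>*" using HH[OF u(1) w(1)] .
    then show "(x,y) \<in> ?A\<^sup>*" using u(2) w(2) rtrancl_trans by metis
  qed
  have "Hs \<in> GPC H" unfolding GPC_def using sc ok dist Hs_def by blast
  moreover have "subdigraph Hs Hhat"
  proof -
    have pa: "set (zip p (tl p)) \<subseteq> arcs Hhat" if "p \<in> set ps" for p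
      using psP[of p] that P by blast
    have a: "arcs Hs \<subseteq> arcs Hhat"
      using arcsHs pa assms(3) unfolding subdigraph_def by blast
    have "verts Hs \<subseteq> verts Hhat"
    proof
      fix x assume "x \<in> verts Hs"
      then consider "x \<in> verts H" | p where "p \<in> set ps" "x \<in> set p" using vertsHs by auto
      then show "x \<in> verts Hhat"
      proof cases
        case 1 then show ?thesis using assms(3) by (auto simp: subdigraph_def)
      next
        case 2
        have "(hd p, x) \<in> (arcs Hhat)\<^sup>*"
          using path_reach[OF 2(2)] rtrancl_mono[OF pa[OF 2(1)]] by blast
        moreover have "hd p \<in> verts Hhat" using ok 2(1) assms(3) unfolding subdigraph_def by blast
        ultimately show ?thesis using assms(2) unfolding is_digraph_def
          by (induction rule: rtrancl_induct) auto
      qed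
    qed
    with a show ?thesis by (simp add: subdigraph_def)
  qed
  ultimately show ?thesis by blast
qed

end
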